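(* Let $\Gamma$ be a dually-closed temporal language that is preserved by $\mathrm{pp}$, $\overline{\mathrm{pp}}$, $\mathrm{lele}$, or $\overline{\mathrm{lele}}$. Then $\Gamma$ is a dually-closed Ord-Horn constraint language.
   Context: A temporal language is a relational structure with domain $\mathbb{Q}$ and finite signature whose relations are first-order definable in $(\mathbb{Q};<)$. An operation preserves $\Gamma$ if applying it componentwise to tuples of any relation of $\Gamma$ yields a tuple of that relation; $\mathrm{Pol}(\Gamma)$ is the set of such operations. Dual of $f$: $\overline{f}(x_1,\dots,x_n)=-f(-x_1,\dots,-x_n)$. $\Gamma$ is dually-closed if $f\in\mathrm{Pol}(\Gamma)$ iff $\overline{f}\in\mathrm{Pol}(\Gamma)$. $\Gamma$ is Ord-Horn if every relation is definable by a conjunction of clauses $(x_1\neq y_1\vee\dots\vee x_k\neq y_k\vee x\,R\,y)$ with $R\in\{<,\le,=\}$, where either the disjunction of disequalities or the literal $x\,R\,y$ may be omitted. $\mathrm{pp}$ is any binary operation with $\mathrm{pp}(a_1,b_1)\le\mathrm{pp}(a_2,b_2)$ iff ($a_1\le0$ and $a_1\le a_2$) or ($0<a_1$, $0<a_2$, $b_1\le b_2$). $\mathrm{lele}$ is any binary operation with $\mathrm{lele}(a_1,b_1)<\mathrm{lele}(a_2,b_2)$ whenever: $a_1\le0$ and $a_1<a_2$; or $a_1\le0$, $a_1=a_2$, $b_1<b_2$; or $a_1,a_2>0$ and $b_1<b_2$; or $a_1>0$, $b_1=b_2$, $a_1<a_2$. *)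

theory Defs
  imports Main "HOL.Rat"
begin

datatype fo =
    FLess nat nat
  | FEq nat nat
  | FNeg fo
  | FConj fo fo
  | FEx nat fo

primrec sat :: "fo \<Rightarrow> (nat \<Rightarrow> rat) \<Rightarrow> bool" where
  "sat (FLess i j) v = (v i < v j)"
| "sat (FEq i j) v = (v i = v j)"
| "sat (FNeg \<phi>) v = (\<not> sat \<phi> v)"
| "sat (FConj \<phi> \<psi>) v = (sat \<phi> v \<and> sat \<psi> v)"
| "sat (FEx x \<phi>) v = (\<exists>a. sat \<phi> (v(x := a)))"

primrec fv :: "fo \<Rightarrow> nat set" where
  "fv (FLess i j) = {i, j}"
| "fv (FEq i j) = {i, j}"
| "fv (FNeg \<phi>) = fv \<phi>"
| "fv (FConj \<phi> \<psi>) = fv \<phi> \<union> fv \<psi>"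
| "fv (FEx x \<phi>) = fv \<phi> - {x}"

text \<open>A relation is a pair (n, R) of an arity n and a set R of rational tuples
  (lists) of length n.\<close>

type_synonym relation = "nat \<times> rat list set"

definition fo_definable :: "relation \<Rightarrow> bool" where
  "fo_definable r \<longleftrightarrow> (\<exists>\<phi>. fv \<phi> \<subseteq> {..<fst r} \<and>
      snd r = {t. length t = fst r \<and> sat \<phi> (\<lambda>i. t ! i)})"

definition temporal_language :: "relation set \<Rightarrow> bool" where
  "temporal_language \<Gamma> \<longleftrightarrow> finite \<Gamma> \<and> (\<forall>r\<in>\<Gamma>. fo_definable r)"

text \<open>An m-ary operation is given as a function on argument lists (applied only to
  lists of length m).  It preserves (n,R) if applying it componentwise to any m
  tuples of R yields a tuple of R.\<close>

definition preserves_rel :: "nat \<Rightarrow> (rat list \<Rightarrow> rat) \<Rightarrow> relation \<Rightarrow> bool" where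
  "preserves_rel m f r \<longleftrightarrow>
     (\<forall>ts. length ts = m \<and> set ts \<subseteq> snd r \<longrightarrow>
        map (\<lambda>i. f (map (\<lambda>t. t ! i) ts)) [0..<fst r] \<in> snd r)"

definition preserves :: "nat \<Rightarrow> (rat list \<Rightarrow> rat) \<Rightarrow> relation set \<Rightarrow> bool" where
  "preserves m f \<Gamma> \<longleftrightarrow> (\<forall>r\<in>\<Gamma>. preserves_rel m f r)"

definition dual_op :: "(rat list \<Rightarrow> rat) \<Rightarrow> rat list \<Rightarrow> rat" where
  "dual_op f xs = - f (map uminus xs)"

definition dually_closed :: "relation set \<Rightarrow> bool" where
  "dually_closed \<Gamma> \<longleftrightarrow>
     (\<forall>m f. m \<ge> 1 \<longrightarrow> (preserves m f \<Gamma> \<longleftrightarrow> preserves m (dual_op f) \<Gamma>))"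

definition binop :: "(rat \<Rightarrow> rat \<Rightarrow> rat) \<Rightarrow> rat list \<Rightarrow> rat" where
  "binop g xs = g (xs ! 0) (xs ! 1)"

definition dual2 :: "(rat \<Rightarrow> rat \<Rightarrow> rat) \<Rightarrow> rat \<Rightarrow> rat \<Rightarrow> rat" where
  "dual2 g a b = - g (- a) (- b)"

definition is_pp :: "(rat \<Rightarrow> rat \<Rightarrow> rat) \<Rightarrow> bool" where
  "is_pp g \<longleftrightarrow> (\<forall>a1 b1 a2 b2.
     g a1 b1 \<le> g a2 b2 \<longleftrightarrow> ((a1 \<le> 0 \<and> a1 \<le> a2) \<or> (0 < a1 \<and> 0 < a2 \<and> b1 \<le> b2)))"

definition is_lele :: "(rat \<Rightarrow> rat \<Rightarrow> rat) \<Rightarrow> bool" where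
  "is_lele g \<longleftrightarrow> (\<forall>a1 b1 a2 b2.
     ((a1 \<le> 0 \<and> a1 < a2) \<or> (a1 \<le> 0 \<and> a1 = a2 \<and> b1 < b2) \<or>
      (a1 > 0 \<and> a2 > 0 \<and> b1 < b2) \<or> (a1 > 0 \<and> b1 = b2 \<and> a1 < a2))
     \<longrightarrow> g a1 b1 < g a2 b2)"

datatype ordrel = OLt | OLe | OEq

text \<open>A clause: a list of disequalities x_i \<noteq> y_i and an optional literal x R y;
  its variables are tuple positions.\<close>
type_synonym clause = "(nat \<times> nat) list \<times> (nat \<times> ordrel \<times> nat) option"

fun ordrel_sem :: "ordrel \<Rightarrow> rat \<Rightarrow> rat \<Rightarrow> bool" where
  "ordrel_sem OLt a b = (a < b)"
| "ordrel_sem OLe a b = (a \<le> b)"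
| "ordrel_sem OEq a b = (a = b)"

fun clause_sat :: "clause \<Rightarrow> rat list \<Rightarrow> bool" where
  "clause_sat (ds, lit) t =
     ((\<exists>(x, y)\<in>set ds. t ! x \<noteq> t ! y) \<or>
      (case lit of None \<Rightarrow> False | Some (x, R, y) \<Rightarrow> ordrel_sem R (t ! x) (t ! y)))"

fun clause_vars :: "clause \<Rightarrow> nat set" where
  "clause_vars (ds, lit) = (\<Union>(x, y)\<in>set ds. {x, y}) \<union>
     (case lit of None \<Rightarrow> {} | Some (x, R, y) \<Rightarrow> {x, y})"

definition ord_horn_rel :: "relation \<Rightarrow> bool" where
  "ord_horn_rel r \<longleftrightarrow> (\<exists>cs :: clause list.
     (\<forall>c\<in>set cs. clause_vars c \<subseteq> {..<fst r}) \<and>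
     snd r = {t. length t = fst r \<and> (\<forall>c\<in>set cs. clause_sat c t)})"

definition ord_horn :: "relation set \<Rightarrow> bool" where
  "ord_horn \<Gamma> \<longleftrightarrow> (\<forall>r\<in>\<Gamma>. ord_horn_rel r)"

end

theory Submission
  imports Defs
begin


lemma rat_between:
  fixes L U :: "rat set"
  assumes "finite L" "finite U" "\<forall>l\<in>L. \<forall>u\<in>U. l < u"
  shows "\<exists>a. (\<forall>l\<in>L. l < a) \<and> (\<forall>u\<in>U. a < u)"
proof (cases "L = {}")
  case True
  show ?thesis
  proof (cases "U = {}")
    case True thus ?thesis using \<open>L = {}\<close> by auto
  next
    case False
    have "\<forall>u\<in>U. Min U - 1 < u" using Min_le[OF assms(2)] by force
    thus ?thesis using \<open>L = {}\<close> by blast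
  qed
next
  case False
  show ?thesis
  proof (cases "U = {}")
    case True
    have "\<forall>l\<in>L. l < Max L + 1" using Max_ge[OF assms(1)] by force
    thus ?thesis using True by blast
  next
    case F2: False
    have "Max L \<in> L" "Min U \<in> U" using False F2 assms by auto
    hence lt: "Max L < Min U" using assms by blast
    have "\<forall>l\<in>L. l < (Max L + Min U)/2" using Max_ge[OF assms(1)] lt by force
    moreover have "\<forall>u\<in>U. (Max L + Min U)/2 < u" using Min_le[OF assms(2)] lt by force
    ultimately show ?thesis by blast
  qed
qed

lemma extend_point:
  fixes v v' :: "nat \<Rightarrow> rat"
  assumes "finite F" "\<forall>i\<in>F. \<forall>j\<in>F. (v i < v j \<longleftrightarrow> v' i < v' j)"
  shows "\<exists>a'. \<forall>i\<in>F. (v i < a \<longleftrightarrow> v' i < a') \<and> (a < v i \<longleftrightarrow> a' < v' i)"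
proof (cases "\<exists>j\<in>F. v j = a")
  case True
  then obtain j where "j \<in> F" "v j = a" by blast
  note jj = this
  have "\<forall>i\<in>F. (v i < a \<longleftrightarrow> v' i < v' j) \<and> (a < v i \<longleftrightarrow> v' j < v' i)"
  proof
    fix i assume i: "i \<in> F"
    have "v i < v j \<longleftrightarrow> v' i < v' j" "v j < v i \<longleftrightarrow> v' j < v' i" using assms(2) i jj(1) by blast+
    thus "(v i < a \<longleftrightarrow> v' i < v' j) \<and> (a < v i \<longleftrightarrow> v' j < v' i)" using jj(2) by simp
  qed
  thus ?thesis by blast
next
  case False
  let ?L = "v' ` {i\<in>F. v i < a}" and ?U = "v' ` {i\<in>F. a < v i}"
  have fin: "finite ?L" "finite ?U" using assms(1) by simp_all
  have "\<forall>l\<in>?L. \<forall>u\<in>?U. l < u"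
  proof (intro ballI)
    fix l u assume "l \<in> ?L" "u \<in> ?U"
    then obtain i j where "i\<in>F" "j\<in>F" "v i < a" "a < v j" "l = v' i" "u = v' j" by blast
    thus "l < u" using assms(2) by (metis order.strict_trans)
  qed
  then obtain a' where a': "\<forall>l\<in>?L. l < a'" "\<forall>u\<in>?U. a' < u"
    using rat_between[OF fin] by blast
  have "\<forall>i\<in>F. (v i < a \<longleftrightarrow> v' i < a') \<and> (a < v i \<longleftrightarrow> a' < v' i)"
  proof
    fix i assume i: "i \<in> F"
    hence "v i \<noteq> a" using False by blast
    hence "v i < a \<or> a < v i" by auto
    thus "(v i < a \<longleftrightarrow> v' i < a') \<and> (a < v i \<longleftrightarrow> a' < v' i)"
    proof
      assume "v i < a" hence "v' i < a'" using a' i by blast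
      thus ?thesis using \<open>v i < a\<close> by auto
    next
      assume "a < v i" hence "a' < v' i" using a' i by blast
      thus ?thesis using \<open>a < v i\<close> by auto
    qed
  qed
  thus ?thesis by blast
qed

lemma finite_fv: "finite (fv \<phi>)"
  by (induction \<phi>) auto

lemma sat_ordertype:
  "\<forall>i\<in>fv \<phi>. \<forall>j\<in>fv \<phi>. (v i < v j \<longleftrightarrow> v' i < v' j) \<Longrightarrow> sat \<phi> v = sat \<phi> v'"
proof (induction \<phi> arbitrary: v v')
  case (FLess i j) thus ?case by simp
next
  case (FEq i j)
  have "v i < v j \<longleftrightarrow> v' i < v' j" "v j < v i \<longleftrightarrow> v' j < v' i" using FEq by auto
  thus ?case by (simp, metis linorder_neqE order.irrefl)
next
  case (FNeg \<phi>) thus ?case by simp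
next
  case (FConj \<phi> \<psi>) thus ?case by (metis UnCI fv.simps(4) sat.simps(4))
next
  case (FEx x \<phi>)
  have one: "sat (FEx x \<phi>) w'" if h: "\<forall>i\<in>fv \<phi> - {x}. \<forall>j\<in>fv \<phi> - {x}. (w i < w j \<longleftrightarrow> w' i < w' j)"
     and s: "sat (FEx x \<phi>) w" for w w'
  proof -
    from s obtain a where a: "sat \<phi> (w(x := a))" by auto
    obtain a' where a': "\<forall>i\<in>fv \<phi> - {x}. (w i < a \<longleftrightarrow> w' i < a') \<and> (a < w i \<longleftrightarrow> a' < w' i)"
      using extend_point[OF _ h, of a] finite_fv by blast
    have "\<forall>i\<in>fv \<phi>. \<forall>j\<in>fv \<phi>. ((w(x:=a)) i < (w(x:=a)) j \<longleftrightarrow> (w'(x:=a')) i < (w'(x:=a')) j)"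
    proof (intro ballI)
      fix i j assume ij: "i \<in> fv \<phi>" "j \<in> fv \<phi>"
      show "((w(x:=a)) i < (w(x:=a)) j) = ((w'(x:=a')) i < (w'(x:=a')) j)"
      proof (cases "i = x")
        case True
        show ?thesis
        proof (cases "j = x")
          case True thus ?thesis using \<open>i = x\<close> by simp
        next
          case False thus ?thesis using \<open>i = x\<close> ij a' by simp
        qed
      next
        case False
        show ?thesis
        proof (cases "j = x")
          case True thus ?thesis using False ij a' by simp
        next
          case F2: False thus ?thesis using False ij h by simp
        qed
      qed
    qed
    hence "sat \<phi> (w(x := a)) = sat \<phi> (w'(x := a'))" by (rule FEx.IH)
    hence "sat \<phi> (w'(x := a'))" using a by simp
    thus ?thesis by auto
  qed
  have h: "\<forall>i\<in>fv \<phi> - {x}. \<forall>j\<in>fv \<phi> - {x}. (v i < v j \<longleftrightarrow> v' i < v' j)" using FEx.prems by simp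
  have h': "\<forall>i\<in>fv \<phi> - {x}. \<forall>j\<in>fv \<phi> - {x}. (v' i < v' j \<longleftrightarrow> v i < v j)" using h by blast
  show ?case
  proof
    assume "sat (FEx x \<phi>) v" thus "sat (FEx x \<phi>) v'" by (rule one[OF h])
  next
    assume "sat (FEx x \<phi>) v'" thus "sat (FEx x \<phi>) v" by (rule one[OF h'])
  qed
qed

lemma fo_ordertype:
  assumes "fo_definable (n, R)" "t \<in> R" "length w = n"
    "\<forall>i<n. \<forall>j<n. (t!i < t!j \<longleftrightarrow> w!i < w!j)"
  shows "w \<in> R"
proof -
  obtain \<phi> where \<phi>: "fv \<phi> \<subseteq> {..<n}" "R = {t. length t = n \<and> sat \<phi> (\<lambda>i. t ! i)}"
    using assms(1) unfolding fo_definable_def by auto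
  have "t \<in> {t. length t = n \<and> sat \<phi> (\<lambda>i. t ! i)}" using assms(2) \<phi>(2) by blast
  hence st: "sat \<phi> (\<lambda>i. t ! i)" by blast
  have "\<forall>i\<in>fv \<phi>. \<forall>j\<in>fv \<phi>. (t!i < t!j \<longleftrightarrow> w!i < w!j)" using \<phi>(1) assms(4) by blast
  hence "sat \<phi> (\<lambda>i. t!i) = sat \<phi> (\<lambda>i. w!i)" by (rule sat_ordertype)
  hence "sat \<phi> (\<lambda>i. w ! i)" using st by blast
  hence "w \<in> {t. length t = n \<and> sat \<phi> (\<lambda>i. t ! i)}" using assms(3) by blast
  thus ?thesis using \<phi>(2) by blast
qed

lemma core:
  fixes R :: "rat list set" and n :: nat and t :: "rat list"
  assumes ot: "\<And>s w. s \<in> R \<Longrightarrow> length w = n \<Longrightarrow> \<forall>i<n. \<forall>j<n. (s!i < s!j \<longleftrightarrow> w!i < w!j) \<Longrightarrow> w \<in> R"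
  and stP: "\<And>u w m. u \<in> R \<Longrightarrow> w \<in> R \<Longrightarrow> m < n \<Longrightarrow> \<exists>s\<in>R. (\<forall>y<n. u!m < u!y \<longrightarrow> s!m < s!y) \<and>
       (\<forall>x<n. \<forall>y<n. u!m < u!x \<and> u!m < u!y \<and> w!x < w!y \<longrightarrow> s!x < s!y) \<and>
       (\<forall>x<n. \<forall>y<n. u!x = u!y \<and> w!x = w!y \<longrightarrow> s!x = s!y)"
  and stQ: "\<And>a b m. a \<in> R \<Longrightarrow> b \<in> R \<Longrightarrow> m < n \<Longrightarrow> \<exists>s\<in>R. (\<forall>y<n. a!m < a!y \<or> b!m < b!y \<longrightarrow> s!m < s!y) \<and>
       (\<forall>x<n. \<forall>y<n. a!x = a!y \<and> b!x = b!y \<longrightarrow> s!x = s!y)"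
  and H: "\<And>x y. x < n \<Longrightarrow> y < n \<Longrightarrow> t!x < t!y \<Longrightarrow> \<exists>s\<in>R. (\<forall>i<n. \<forall>j<n. t!i = t!j \<longrightarrow> s!i = s!j) \<and> s!x < s!y"
  and ne: "\<exists>s\<in>R. \<forall>i<n. \<forall>j<n. t!i = t!j \<longrightarrow> s!i = s!j"
  and lt: "length t = n"
  shows "t \<in> R"
proof -
  define E where "E = {s\<in>R. \<forall>i<n. \<forall>j<n. t!i = t!j \<longrightarrow> s!i = s!j}"
  have Q: "\<exists>s\<in>E. \<forall>y\<in>S. s!m < s!y" if "finite S" "S \<subseteq> {..<n}" "m < n" "\<forall>y\<in>S. t!m < t!y" for S m
    using that
  proof (induction S rule: finite_induct)
    case empty thus ?case using ne unfolding E_def by blast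
  next
    case (insert z S)
    then obtain s where s: "s \<in> E" "\<forall>y\<in>S. s!m < s!y" by blast
    have "z < n" "t!m < t!z" using insert.prems by auto
    then obtain s' where s': "s' \<in> E" "s'!m < s'!z" using H[of m z] insert.prems unfolding E_def by blast
    obtain r where r: "r \<in> R" "\<forall>y<n. s'!m < s'!y \<or> s!m < s!y \<longrightarrow> r!m < r!y"
       "\<forall>x<n. \<forall>y<n. s'!x = s'!y \<and> s!x = s!y \<longrightarrow> r!x = r!y"
      using stQ[of s' s m] s s' insert.prems unfolding E_def by blast
    have "\<forall>i<n. \<forall>j<n. t!i = t!j \<longrightarrow> r!i = r!j"
    proof (intro allI impI)
      fix i j assume ij: "i < n" "j < n" "t!i = t!j"
      hence "s'!i = s'!j" "s!i = s!j" using s(1) s'(1) unfolding E_def by blast+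
      thus "r!i = r!j" using r(3) ij by blast
    qed
    hence "r \<in> E" using r(1) unfolding E_def by blast
    moreover have "\<forall>y\<in>insert z S. r!m < r!y"
    proof
      fix y assume y: "y \<in> insert z S"
      hence "y < n" using insert.prems by auto
      thus "r!m < r!y" using y r(2) s(2) s'(2) by auto
    qed
    ultimately show ?case by blast
  qed
  have P: "\<exists>w\<in>E. \<forall>x\<in>S. \<forall>y\<in>S. t!x < t!y \<longrightarrow> w!x < w!y" if "finite S" "S \<subseteq> {..<n}" for S
    using that
  proof (induction S rule: finite_ranking_induct[where f = "\<lambda>i. - (t!i)"])
    case empty thus ?case using ne unfolding E_def by blast
  next
    case (insert z S)
    then obtain w where w: "w \<in> E" "\<forall>x\<in>S. \<forall>y\<in>S. t!x < t!y \<longrightarrow> w!x < w!y" by blast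
    have zn: "z < n" using insert.prems by auto
    define S1 where "S1 = {y\<in>S. t!z < t!y}"
    have "finite S1" "S1 \<subseteq> {..<n}" "\<forall>y\<in>S1. t!z < t!y"
      using insert S1_def by auto
    then obtain u where u: "u \<in> E" "\<forall>y\<in>S1. u!z < u!y" using Q zn by blast
    obtain r where r: "r \<in> R" "\<forall>y<n. u!z < u!y \<longrightarrow> r!z < r!y"
       "\<forall>x<n. \<forall>y<n. u!z < u!x \<and> u!z < u!y \<and> w!x < w!y \<longrightarrow> r!x < r!y"
       "\<forall>x<n. \<forall>y<n. u!x = u!y \<and> w!x = w!y \<longrightarrow> r!x = r!y"
      using stP[of u w z] u w zn unfolding E_def by blast
    have "\<forall>i<n. \<forall>j<n. t!i = t!j \<longrightarrow> r!i = r!j"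
    proof (intro allI impI)
      fix i j assume ij: "i < n" "j < n" "t!i = t!j"
      hence "u!i = u!j" "w!i = w!j" using u(1) w(1) unfolding E_def by blast+
      thus "r!i = r!j" using r(4) ij by blast
    qed
    hence rE: "r \<in> E" using r(1) unfolding E_def by blast
    have "\<forall>x\<in>insert z S. \<forall>y\<in>insert z S. t!x < t!y \<longrightarrow> r!x < r!y"
    proof (intro ballI impI)
      fix x y assume x: "x \<in> insert z S" and y: "y \<in> insert z S" and xy: "t!x < t!y"
      have xn: "x < n" and yn: "y < n" using x y insert.prems by auto
      have zmin: "\<And>y. y \<in> S \<Longrightarrow> t!z \<le> t!y" using insert.hyps(2) by force
      show "r!x < r!y"
      proof (cases "x = z")
        case True
        hence "y \<in> S1" using y xy S1_def by auto
        thus ?thesis using u(2) r(2) True yn by blast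
      next
        case False
        hence xS: "x \<in> S" using x by blast
        have yS: "y \<in> S" using y xy zmin xS by force
        hence "y \<in> S1" using xy zmin[OF xS] S1_def by auto
        hence uy: "u!z < u!y" using u(2) by blast
        have wxy: "w!x < w!y" using w(2) xS yS xy by blast
        show ?thesis
        proof (cases "t!x = t!z")
          case True
          hence "u!x = u!z" "w!x = w!z" using u(1) w(1) xn zn unfolding E_def by blast+
          hence "r!x = r!z" using r(4) xn zn by blast
          thus ?thesis using r(2) uy yn by simp
        next
          case F: False
          hence "x \<in> S1" using zmin[OF xS] xS S1_def by auto
          hence "u!z < u!x" using u(2) by blast
          thus ?thesis using r(3) uy wxy xn yn by blast
        qed
      qed
    qed
    thus ?case using rE by blast
  qed
  obtain w where w: "w \<in> E" "\<forall>x\<in>{..<n}. \<forall>y\<in>{..<n}. t!x < t!y \<longrightarrow> w!x < w!y"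
    using P[OF finite_lessThan subset_refl] by blast
  have wR: "w \<in> R" and weq: "\<forall>i<n. \<forall>j<n. t!i = t!j \<longrightarrow> w!i = w!j" using w(1) unfolding E_def by blast+
  have "\<forall>i<n. \<forall>j<n. (w!i < w!j \<longleftrightarrow> t!i < t!j)"
  proof (intro allI impI)
    fix i j assume ij: "i < n" "j < n"
    have a: "t!i < t!j \<Longrightarrow> w!i < w!j" using w(2) ij by simp
    have b: "w!i < w!j \<Longrightarrow> t!i < t!j"
    proof (rule ccontr)
      assume wl: "w!i < w!j" and "\<not> t!i < t!j"
      hence "t!i = t!j \<or> t!j < t!i" by (simp add: not_less_iff_gr_or_eq, blast)
      thus False
      proof
        assume "t!i = t!j" hence "w!i = w!j" using weq ij by blast
        thus False using wl by simp
      next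
        assume "t!j < t!i" hence "w!j < w!i" using w(2) ij by simp
        thus False using wl by simp
      qed
    qed
    show "(w!i < w!j \<longleftrightarrow> t!i < t!j)" using a b by blast
  qed
  thus ?thesis by (rule ot[OF wR lt])
qed

definition good :: "(rat \<Rightarrow> rat \<Rightarrow> rat) \<Rightarrow> bool" where
  "good g \<longleftrightarrow> (\<forall>a1 a2 b1 b2. a1 \<le> 0 \<and> 0 < a2 \<longrightarrow> g a1 b1 < g a2 b2) \<and>
               (\<forall>a1 a2 b1 b2. 0 < a1 \<and> 0 < a2 \<and> b1 < b2 \<longrightarrow> g a1 b1 < g a2 b2)"

lemma good1: "good g \<Longrightarrow> a1 \<le> 0 \<Longrightarrow> 0 < a2 \<Longrightarrow> g a1 b1 < g a2 b2"
  unfolding good_def by blast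

lemma good2: "good g \<Longrightarrow> 0 < a1 \<Longrightarrow> 0 < a2 \<Longrightarrow> b1 < b2 \<Longrightarrow> g a1 b1 < g a2 b2"
  unfolding good_def by blast

lemma fo_len: "fo_definable (n, R) \<Longrightarrow> t \<in> R \<Longrightarrow> length t = n"
  unfolding fo_definable_def by auto

lemma fo_map:
  assumes "fo_definable (n, R)" "t \<in> R" "strict_mono h"
  shows "map h t \<in> R"
proof -
  have l: "length t = n" using fo_len assms by blast
  have "\<forall>i<n. \<forall>j<n. (t!i < t!j \<longleftrightarrow> map h t!i < map h t!j)"
    using l strict_mono_less[OF assms(3)] by simp
  thus ?thesis using fo_ordertype[OF assms(1,2)] l by simp
qed

lemma pres2:
  assumes "preserves_rel 2 (binop g) (n, R)" "a \<in> R" "b \<in> R"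
  shows "map (\<lambda>i. g (a!i) (b!i)) [0..<n] \<in> R"
proof -
  have "length [a, b] = 2 \<and> set [a, b] \<subseteq> snd (n, R)" using assms(2,3) by simp
  hence "map (\<lambda>i. binop g (map (\<lambda>t. t ! i) [a, b])) [0..<fst (n, R)] \<in> snd (n, R)"
    using assms(1) unfolding preserves_rel_def by blast
  thus ?thesis by (simp add: binop_def)
qed

lemma stepP:
  assumes fo: "fo_definable (n, R)" and gd: "good g" and pr: "preserves_rel 2 (binop g) (n, R)"
    and uw: "u \<in> R" "w \<in> R" and m: "m < n"
  shows "\<exists>s\<in>R. (\<forall>y<n. u!m < u!y \<longrightarrow> s!m < s!y) \<and>
       (\<forall>x<n. \<forall>y<n. u!m < u!x \<and> u!m < u!y \<and> w!x < w!y \<longrightarrow> s!x < s!y) \<and>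
       (\<forall>x<n. \<forall>y<n. u!x = u!y \<and> w!x = w!y \<longrightarrow> s!x = s!y)"
proof -
  let ?h = "\<lambda>x. x - u!m"
  have sm: "strict_mono ?h" by (auto simp: strict_mono_def)
  have u': "map ?h u \<in> R" using fo_map[OF fo uw(1) sm] .
  have lu: "length u = n" using fo_len[OF fo uw(1)] .
  define s where "s = map (\<lambda>i. g (map ?h u!i) (w!i)) [0..<n]"
  have sR: "s \<in> R" unfolding s_def using pres2[OF pr u' uw(2)] .
  have si: "\<And>i. i < n \<Longrightarrow> s!i = g (u!i - u!m) (w!i)" unfolding s_def using lu by simp
  have A: "\<forall>y<n. u!m < u!y \<longrightarrow> s!m < s!y"
  proof (intro allI impI)
    fix y assume "y < n" "u!m < u!y"
    thus "s!m < s!y" using si m good1[OF gd, of "u!m - u!m" "u!y - u!m"] by simp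
  qed
  have B: "\<forall>x<n. \<forall>y<n. u!m < u!x \<and> u!m < u!y \<and> w!x < w!y \<longrightarrow> s!x < s!y"
  proof (intro allI impI)
    fix x y assume "x < n" "y < n" "u!m < u!x \<and> u!m < u!y \<and> w!x < w!y"
    thus "s!x < s!y" using si good2[OF gd, of "u!x - u!m" "u!y - u!m" "w!x" "w!y"] by simp
  qed
  have C: "\<forall>x<n. \<forall>y<n. u!x = u!y \<and> w!x = w!y \<longrightarrow> s!x = s!y"
    using si by simp
  show ?thesis using sR A B C by blast
qed

lemma stepQ:
  assumes fo: "fo_definable (n, R)" and gd: "good g" and pr: "preserves_rel 2 (binop (dual2 g)) (n, R)"
    and ab: "a \<in> R" "b \<in> R" and m: "m < n"
  shows "\<exists>s\<in>R. (\<forall>y<n. a!m < a!y \<or> b!m < b!y \<longrightarrow> s!m < s!y) \<and>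
       (\<forall>x<n. \<forall>y<n. a!x = a!y \<and> b!x = b!y \<longrightarrow> s!x = s!y)"
proof -
  define h where "h = (\<lambda>x. if x \<le> a!m then x - a!m - 1 else x - a!m)"
  have sm: "strict_mono h" unfolding strict_mono_def h_def by auto
  have a': "map h a \<in> R" using fo_map[OF fo ab(1) sm] .
  have la: "length a = n" using fo_len[OF fo ab(1)] .
  define s where "s = map (\<lambda>i. dual2 g (map h a!i) (b!i)) [0..<n]"
  have sR: "s \<in> R" unfolding s_def using pres2[OF pr a' ab(2)] .
  have si: "\<And>i. i < n \<Longrightarrow> s!i = - g (- h (a!i)) (- (b!i))" unfolding s_def dual2_def using la by simp
  have hm: "h (a!m) = -1" unfolding h_def by simp
  have A: "\<forall>y<n. a!m < a!y \<or> b!m < b!y \<longrightarrow> s!m < s!y"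
  proof (intro allI impI)
    fix y assume y: "y < n" and d: "a!m < a!y \<or> b!m < b!y"
    show "s!m < s!y"
    proof (cases "a!m < a!y")
      case True
      hence "0 < h (a!y)" unfolding h_def by simp
      hence "g (- h (a!y)) (- (b!y)) < g (- h (a!m)) (- (b!m))"
        using good1[OF gd, of "- h (a!y)" "- h (a!m)"] hm by simp
      thus ?thesis using si y m by simp
    next
      case False
      hence "b!m < b!y" "h (a!y) < 0" using d unfolding h_def by auto
      hence "g (- h (a!y)) (- (b!y)) < g (- h (a!m)) (- (b!m))"
        using good2[OF gd, of "- h (a!y)" "- h (a!m)" "- (b!y)" "- (b!m)"] hm by simp
      thus ?thesis using si y m by simp
    qed
  qed
  have C: "\<forall>x<n. \<forall>y<n. a!x = a!y \<and> b!x = b!y \<longrightarrow> s!x = s!y"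
    using si by simp
  show ?thesis using sR A C by blast
qed

lemma ordrel_UNIV: "(UNIV :: ordrel set) = {OLt, OLe, OEq}"
  using ordrel.exhaust by auto

lemma ord_horn_rel_main:
  assumes fo: "fo_definable (n, R)" and gd: "good g"
    and pr1: "preserves_rel 2 (binop g) (n, R)"
    and pr2: "preserves_rel 2 (binop (dual2 g)) (n, R)"
  shows "ord_horn_rel (n, R)"
proof -
  define P where "P = List.product [0..<n] [0..<n]"
  have setP: "set P = {..<n} \<times> {..<n}" unfolding P_def by auto
  define Lits where "Lits = insert None (Some ` ({..<n} \<times> (UNIV :: ordrel set) \<times> {..<n}))"
  have "finite (UNIV :: ordrel set)" by (simp add: ordrel_UNIV)
  hence finL: "finite Lits" unfolding Lits_def by simp
  define C where "C = {c :: clause. set (fst c) \<subseteq> set P \<and> length (fst c) \<le> length P \<and> snd c \<in> Lits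
      \<and> (\<forall>s\<in>R. clause_sat c s)}"
  have "C \<subseteq> {xs. set xs \<subseteq> set P \<and> length xs \<le> length P} \<times> Lits"
    unfolding C_def by auto
  moreover have "finite ({xs. set xs \<subseteq> set P \<and> length xs \<le> length P} \<times> Lits)"
    using finite_lists_length_le[of "set P" "length P"] finL by simp
  ultimately have "finite C" by (rule finite_subset)
  then obtain cs where cs: "set cs = C" using finite_list by blast
  have vars: "\<forall>c\<in>set cs. clause_vars c \<subseteq> {..<fst (n, R)}"
  proof
    fix c assume "c \<in> set cs"
    hence c: "set (fst c) \<subseteq> set P" "snd c \<in> Lits" using cs C_def by auto
    obtain ds lit where dl: "c = (ds, lit)" by (cases c)
    have "(\<Union>(x, y)\<in>set ds. {x, y}) \<subseteq> {..<n}" using c(1) dl setP by auto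
    moreover have "(case lit of None \<Rightarrow> {} | Some (x, R, y) \<Rightarrow> {x, y}) \<subseteq> {..<n}"
      using c(2) dl unfolding Lits_def by auto
    ultimately show "clause_vars c \<subseteq> {..<fst (n, R)}" using dl by simp
  qed
  have eq: "R = {t. length t = n \<and> (\<forall>c\<in>set cs. clause_sat c t)}"
  proof
    show "R \<subseteq> {t. length t = n \<and> (\<forall>c\<in>set cs. clause_sat c t)}"
      using fo_len[OF fo] cs unfolding C_def by auto
  next
    show "{t. length t = n \<and> (\<forall>c\<in>set cs. clause_sat c t)} \<subseteq> R"
    proof
      fix t assume "t \<in> {t. length t = n \<and> (\<forall>c\<in>set cs. clause_sat c t)}"
      hence lt: "length t = n" and allc: "\<forall>c\<in>C. clause_sat c t" using cs by auto
      show "t \<in> R"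
      proof (rule ccontr)
        assume tR: "t \<notin> R"
        define ds where "ds = filter (\<lambda>(i, j). t!i = t!j) P"
        have dsP: "set ds \<subseteq> set P" "length ds \<le> length P" unfolding ds_def by auto
        have dsiff: "(\<exists>(x, y)\<in>set ds. s!x \<noteq> s!y) \<longleftrightarrow> \<not> (\<forall>i<n. \<forall>j<n. t!i = t!j \<longrightarrow> s!i = s!j)" for s :: "rat list"
          unfolding ds_def using setP by auto
        have tds: "\<not> (\<exists>(x, y)\<in>set ds. t!x \<noteq> t!y)" using dsiff by blast
        show False
        proof (cases "\<exists>s\<in>R. \<forall>i<n. \<forall>j<n. t!i = t!j \<longrightarrow> s!i = s!j")
          case False
          have "(ds, None) \<in> C" unfolding C_def Lits_def using dsP False dsiff by auto
          hence "clause_sat (ds, None) t" using allc by blast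
          thus False using tds by simp
        next
          case ne: True
          have "\<not> (\<forall>x y. x < n \<longrightarrow> y < n \<longrightarrow> t!x < t!y \<longrightarrow>
                 (\<exists>s\<in>R. (\<forall>i<n. \<forall>j<n. t!i = t!j \<longrightarrow> s!i = s!j) \<and> s!x < s!y))"
          proof
            assume H: "\<forall>x y. x < n \<longrightarrow> y < n \<longrightarrow> t!x < t!y \<longrightarrow>
                 (\<exists>s\<in>R. (\<forall>i<n. \<forall>j<n. t!i = t!j \<longrightarrow> s!i = s!j) \<and> s!x < s!y)"
            have "t \<in> R"
            proof (rule core[where R = R and n = n])
              show "\<And>s w. s \<in> R \<Longrightarrow> length w = n \<Longrightarrow> \<forall>i<n. \<forall>j<n. (s!i < s!j \<longleftrightarrow> w!i < w!j) \<Longrightarrow> w \<in> R"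
                using fo_ordertype[OF fo] by blast
              show "\<And>u w m. u \<in> R \<Longrightarrow> w \<in> R \<Longrightarrow> m < n \<Longrightarrow> \<exists>s\<in>R. (\<forall>y<n. u!m < u!y \<longrightarrow> s!m < s!y) \<and>
                 (\<forall>x<n. \<forall>y<n. u!m < u!x \<and> u!m < u!y \<and> w!x < w!y \<longrightarrow> s!x < s!y) \<and>
                 (\<forall>x<n. \<forall>y<n. u!x = u!y \<and> w!x = w!y \<longrightarrow> s!x = s!y)"
                by (rule stepP[OF fo gd pr1])
              show "\<And>a b m. a \<in> R \<Longrightarrow> b \<in> R \<Longrightarrow> m < n \<Longrightarrow> \<exists>s\<in>R. (\<forall>y<n. a!m < a!y \<or> b!m < b!y \<longrightarrow> s!m < s!y) \<and>
                 (\<forall>x<n. \<forall>y<n. a!x = a!y \<and> b!x = b!y \<longrightarrow> s!x = s!y)"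
                by (rule stepQ[OF fo gd pr2])
              show "\<And>x y. x < n \<Longrightarrow> y < n \<Longrightarrow> t!x < t!y \<Longrightarrow> \<exists>s\<in>R. (\<forall>i<n. \<forall>j<n. t!i = t!j \<longrightarrow> s!i = s!j) \<and> s!x < s!y"
                using H by blast
              show "\<exists>s\<in>R. \<forall>i<n. \<forall>j<n. t!i = t!j \<longrightarrow> s!i = s!j" using ne .
              show "length t = n" using lt .
            qed
            thus False using tR by blast
          qed
          then obtain x y where xy: "x < n" "y < n" "t!x < t!y"
            and nos: "\<forall>s\<in>R. (\<forall>i<n. \<forall>j<n. t!i = t!j \<longrightarrow> s!i = s!j) \<longrightarrow> \<not> s!x < s!y" by blast
          have "\<forall>s\<in>R. clause_sat (ds, Some (y, OLe, x)) s"
          proof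
            fix s assume sR: "s \<in> R"
            show "clause_sat (ds, Some (y, OLe, x)) s"
            proof (cases "\<forall>i<n. \<forall>j<n. t!i = t!j \<longrightarrow> s!i = s!j")
              case True
              hence "\<not> s!x < s!y" using nos sR by blast
              thus ?thesis by simp
            next
              case False
              hence "\<exists>(x, y)\<in>set ds. s!x \<noteq> s!y" using dsiff by blast
              thus ?thesis by simp
            qed
          qed
          hence "(ds, Some (y, OLe, x)) \<in> C" unfolding C_def Lits_def using dsP xy by auto
          hence "clause_sat (ds, Some (y, OLe, x)) t" using allc by blast
          thus False using tds xy(3) by simp
        qed
      qed
    qed
  qed
  show ?thesis unfolding ord_horn_rel_def using vars eq by auto
qed

lemma pres_rel_cong:
  assumes "\<And>xs. length xs = m \<Longrightarrow> f xs = f' xs" "preserves_rel m f r"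
  shows "preserves_rel m f' r"
  unfolding preserves_rel_def
proof (intro allI impI)
  fix ts assume ts: "length ts = m \<and> set ts \<subseteq> snd r"
  hence "map (\<lambda>i. f (map (\<lambda>t. t!i) ts)) [0..<fst r] \<in> snd r" using assms(2) unfolding preserves_rel_def by blast
  moreover have "map (\<lambda>i. f (map (\<lambda>t. t!i) ts)) [0..<fst r] = map (\<lambda>i. f' (map (\<lambda>t. t!i) ts)) [0..<fst r]"
  proof (rule map_cong[OF refl])
    fix i show "f (map (\<lambda>t. t!i) ts) = f' (map (\<lambda>t. t!i) ts)" using ts assms(1)[of "map (\<lambda>t. t!i) ts"] by simp
  qed
  ultimately show "map (\<lambda>i. f' (map (\<lambda>t. t!i) ts)) [0..<fst r] \<in> snd r" by simp
qed

lemma pres_cong: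
  assumes "\<And>xs. length xs = m \<Longrightarrow> f xs = f' xs"
  shows "preserves m f \<Gamma> = preserves m f' \<Gamma>"
proof -
  have b: "\<And>xs. length xs = m \<Longrightarrow> f' xs = f xs" using assms by metis
  have "preserves_rel m f r = preserves_rel m f' r" for r
    using pres_rel_cong[of m f f' r, OF assms] pres_rel_cong[of m f' f r, OF b] by blast
  thus ?thesis unfolding preserves_def by simp
qed

lemma dual_binop1: "length xs = 2 \<Longrightarrow> dual_op (binop g) xs = binop (dual2 g) xs"
  unfolding dual_op_def binop_def dual2_def by simp

lemma dual_binop2: "length xs = 2 \<Longrightarrow> dual_op (binop (dual2 g)) xs = binop g xs"
  unfolding dual_op_def binop_def dual2_def by simp

lemma pp_good:
  assumes "is_pp g" shows "good g"
proof -
  have A: "\<And>a1 a2 b1 b2. g a1 b1 \<le> g a2 b2 \<longleftrightarrow> ((a1 \<le> 0 \<and> a1 \<le> a2) \<or> (0 < a1 \<and> 0 < a2 \<and> b1 \<le> b2))"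
    using assms unfolding is_pp_def by blast
  have 1: "g a1 b1 < g a2 b2" if "a1 \<le> 0" "0 < a2" for a1 a2 b1 b2
  proof -
    have "\<not> g a2 b2 \<le> g a1 b1" using A[of a2 b2 a1 b1] that by simp
    thus ?thesis by simp
  qed
  have 2: "g a1 b1 < g a2 b2" if "0 < a1" "0 < a2" "b1 < b2" for a1 a2 b1 b2
  proof -
    have "\<not> g a2 b2 \<le> g a1 b1" using A[of a2 b2 a1 b1] that by simp
    thus ?thesis by simp
  qed
  show ?thesis unfolding good_def using 1 2 by blast
qed

lemma lele_good:
  assumes "is_lele g" shows "good g"
proof -
  have A: "\<And>a1 a2 b1 b2. ((a1 \<le> 0 \<and> a1 < a2) \<or> (a1 \<le> 0 \<and> a1 = a2 \<and> b1 < b2) \<or>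
      (a1 > 0 \<and> a2 > 0 \<and> b1 < b2) \<or> (a1 > 0 \<and> b1 = b2 \<and> a1 < a2)) \<Longrightarrow> g a1 b1 < g a2 b2"
    using assms unfolding is_lele_def by blast
  have 1: "g a1 b1 < g a2 b2" if "a1 \<le> 0" "0 < a2" for a1 a2 b1 b2
    using that by (intro A) simp
  have 2: "g a1 b1 < g a2 b2" if "0 < a1" "0 < a2" "b1 < b2" for a1 a2 b1 b2
    using that by (intro A) simp
  show ?thesis unfolding good_def using 1 2 by blast
qed

lemma dual_pres1: "dually_closed \<Gamma> \<Longrightarrow> preserves 2 (binop g) \<Gamma> \<Longrightarrow> preserves 2 (binop (dual2 g)) \<Gamma>"
proof -
  assume dc: "dually_closed \<Gamma>" and p: "preserves 2 (binop g) \<Gamma>"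
  have "preserves 2 (binop g) \<Gamma> \<longleftrightarrow> preserves 2 (dual_op (binop g)) \<Gamma>"
    using dc unfolding dually_closed_def by (metis one_le_numeral)
  hence "preserves 2 (dual_op (binop g)) \<Gamma>" using p by blast
  moreover have "preserves 2 (dual_op (binop g)) \<Gamma> = preserves 2 (binop (dual2 g)) \<Gamma>"
    by (rule pres_cong) (rule dual_binop1)
  ultimately show ?thesis by simp
qed

lemma dual_pres2: "dually_closed \<Gamma> \<Longrightarrow> preserves 2 (binop (dual2 g)) \<Gamma> \<Longrightarrow> preserves 2 (binop g) \<Gamma>"
proof -
  assume dc: "dually_closed \<Gamma>" and p: "preserves 2 (binop (dual2 g)) \<Gamma>"
  have "preserves 2 (binop (dual2 g)) \<Gamma> \<longleftrightarrow> preserves 2 (dual_op (binop (dual2 g))) \<Gamma>"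
    using dc unfolding dually_closed_def by (metis one_le_numeral)
  hence "preserves 2 (dual_op (binop (dual2 g))) \<Gamma>" using p by blast
  moreover have "preserves 2 (dual_op (binop (dual2 g))) \<Gamma> = preserves 2 (binop g) \<Gamma>"
    by (rule pres_cong) (rule dual_binop2)
  ultimately show ?thesis by simp
qed

theorem lemma4p5:
  fixes \<Gamma> :: "relation set"
  assumes "temporal_language \<Gamma>"
    and "dually_closed \<Gamma>"
    and "(\<exists>g. is_pp g \<and> preserves 2 (binop g) \<Gamma>) \<or>
         (\<exists>g. is_pp g \<and> preserves 2 (binop (dual2 g)) \<Gamma>) \<or>
         (\<exists>g. is_lele g \<and> preserves 2 (binop g) \<Gamma>) \<or>
         (\<exists>g. is_lele g \<and> preserves 2 (binop (dual2 g)) \<Gamma>)"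
  shows "dually_closed \<Gamma> \<and> ord_horn \<Gamma>"
proof -
  obtain g where g: "good g" "preserves 2 (binop g) \<Gamma>" "preserves 2 (binop (dual2 g)) \<Gamma>"
  proof -
    from assms(3) show ?thesis
    proof (elim disjE exE conjE)
      fix g assume "is_pp g" "preserves 2 (binop g) \<Gamma>"
      thus ?thesis using that pp_good dual_pres1[OF assms(2)] by blast
    next
      fix g assume "is_pp g" "preserves 2 (binop (dual2 g)) \<Gamma>"
      thus ?thesis using that pp_good dual_pres2[OF assms(2)] by blast
    next
      fix g assume "is_lele g" "preserves 2 (binop g) \<Gamma>"
      thus ?thesis using that lele_good dual_pres1[OF assms(2)] by blast
    next
      fix g assume "is_lele g" "preserves 2 (binop (dual2 g)) \<Gamma>"
      thus ?thesis using that lele_good dual_pres2[OF assms(2)] by blast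
    qed
  qed
  have "ord_horn_rel r" if r: "r \<in> \<Gamma>" for r
  proof -
    obtain n R where nR: "r = (n, R)" by (cases r)
    have "fo_definable (n, R)" using assms(1) r nR unfolding temporal_language_def by blast
    moreover have "preserves_rel 2 (binop g) (n, R)" "preserves_rel 2 (binop (dual2 g)) (n, R)"
      using g(2,3) r nR unfolding preserves_def by blast+
    ultimately show ?thesis using ord_horn_rel_main g(1) nR by blast
  qed
  thus ?thesis using assms(2) unfolding ord_horn_def by blast
qed

end
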